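(* Let $\Delta\subseteq\mathbb{Q}^d$ be a $d$-dimensional IP simplex of Gorenstein index $g$ with associated unit fraction partition $A(\Delta)=(\alpha_0,\dots,\alpha_d)$. Then $A(\Delta)=A(\Delta^* )$ and \begin{enumerate} \item $\mathrm{Vol}(\Delta)\mathrm{Vol}(\Delta^* )=\dfrac{\alpha_0\cdots\alpha_d}{g^{d+1}}$; \item $\lambda(\Delta^* )\mathrm{Vol}(\Delta)=\lambda(\Delta)\mathrm{Vol}(\Delta^* )=\dfrac{1}{g^d}\dfrac{\alpha_0\cdots\alpha_d}{\mathrm{lcm}(\alpha_0,\dots,\alpha_d)}$; \item $\lambda(\Delta)\lambda(\Delta^* )=\dfrac{1}{g^{d-1}}\dfrac{\alpha_0\cdots\alpha_d}{\mathrm{lcm}(\alpha_0,\dots,\alpha_d)^2}$. \end{enumerate}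
   Context: An IP simplex is a full-dimensional rational simplex in $\mathbb{Q}^d$ containing the origin in its interior; its dual is $\Delta^*=\{u:\langle u,v\rangle\ge-1\ \forall v\in\Delta\}$ (again an IP simplex). Gorenstein index: $g(\Delta)=g_{\mathbb{Q}}(\Delta)g_{\mathbb{Q}}(\Delta^* )$, where $g_{\mathbb{Q}}(\Delta)$ is the least $k\ge1$ with $k\Delta$ having integral vertices. $\mathrm{Vol}=d!\cdot$Euclidean volume. For an IP simplex with vertices $v_0,\dots,v_d$ its weight system is $Q_\Delta=(q_0,\dots,q_d)$, $q_i=|\det(v_j:j\neq i)|$, and $|Q_\Delta|=q_0+\dots+q_d$. The factor $\lambda(\Delta)$ is the unique positive rational such that $Q_\Delta=\lambda(\Delta)\,Q'$ with $Q'$ a tuple of positive integers with $\gcd 1$. The associated unit fraction partition is $A(\Delta)=\big(\tfrac{g|Q_\Delta|}{q_0},\dots,\tfrac{g|Q_\Delta|}{q_d}\big)$, a tuple of positive integers with $\sum_i 1/\alpha_i=1/g$. *)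

theory Defs
  imports "HOL-Analysis.Analysis" "HOL-Library.Multiset"
begin

text \<open>Simplices live in the Euclidean space real^'n with d = CARD('n);
 rationality of Q^d is imposed by requiring rational vertex coordinates.\<close>

definition rat_vec :: "real^'n \<Rightarrow> bool" where
  "rat_vec x \<longleftrightarrow> (\<forall>i. x $ i \<in> \<rat>)"

definition int_vec :: "real^'n \<Rightarrow> bool" where
  "int_vec x \<longleftrightarrow> (\<forall>i. x $ i \<in> \<int>)"

definition IP_simplex :: "(real^'n) set \<Rightarrow> bool" where
  "IP_simplex S \<longleftrightarrow> (\<exists>V. finite V \<and> card V = CARD('n) + 1 \<and> \<not> affine_dependent V \<and>
      S = convex hull V \<and> (\<forall>v\<in>V. rat_vec v) \<and> 0 \<in> interior S)"

definition verts :: "(real^'n) set \<Rightarrow> (real^'n) set" where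
  "verts S = {x. x extreme_point_of S}"

definition dual :: "(real^'n) set \<Rightarrow> (real^'n) set" where
  "dual S = {u. \<forall>v\<in>S. inner u v \<ge> -1}"

definition gQ :: "(real^'n) set \<Rightarrow> nat" where
  "gQ S = (LEAST k::nat. k \<ge> 1 \<and> (\<forall>v\<in>verts S. int_vec (real k *\<^sub>R v)))"

definition gorenstein :: "(real^'n) set \<Rightarrow> nat" where
  "gorenstein S = gQ S * gQ (dual S)"

definition Vol :: "(real^'n) set \<Rightarrow> real" where
  "Vol S = fact CARD('n) * measure lborel S"

text \<open>Weight of vertex v: absolute value of the determinant of the other
 d vertices (listed in an arbitrary order; the absolute value does not depend on it).\<close>
definition weight :: "(real^'n) set \<Rightarrow> real^'n \<Rightarrow> real" where
  "weight S v = (let f = (SOME f. bij_betw f (UNIV::'n set) (verts S - {v}))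
                 in \<bar>det (\<chi> i. f i)\<bar>)"

definition weight_sum :: "(real^'n) set \<Rightarrow> real" where
  "weight_sum S = (\<Sum>v\<in>verts S. weight S v)"

definition lam :: "(real^'n) set \<Rightarrow> real" where
  "lam S = (THE l. l \<in> \<rat> \<and> l > 0 \<and>
      (\<exists>c :: real^'n \<Rightarrow> nat. (\<forall>v\<in>verts S. c v > 0 \<and> weight S v = l * real (c v))
          \<and> Gcd (c ` verts S) = 1))"

text \<open>Unit fraction partition, as a multiset (the vertices of a simplex are unordered).\<close>
definition ufp :: "(real^'n) set \<Rightarrow> real multiset" where
  "ufp S = image_mset (\<lambda>v. real (gorenstein S) * weight_sum S / weight S v) (mset_set (verts S))"

end

theory Submission
  imports Defs
begin


lemma det_shear_aux:
  fixes m n :: "'n::finite"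
  assumes "m \<noteq> n"
  shows "det (matrix (\<lambda>v::real^'n. \<chi> i. if i = m then v $ m + v $ n else v $ i)) = 1"
proof -
  have "matrix (\<lambda>v::real^'n. \<chi> i. if i = m then v $ m + v $ n else v $ i)
      = (\<chi> k. if k = m then row m (mat 1) + 1 *s row n (mat 1) else row k (mat 1 :: real^'n^'n))"
    by (auto simp: matrix_def vec_eq_iff row_def mat_def axis_def)
  also have "det \<dots> = det (mat 1 :: real^'n^'n)"
    by (rule det_row_operation[OF assms])
  finally show ?thesis by simp
qed

proposition
 fixes f :: "real^'n::finite \<Rightarrow> real^'n"
  assumes "linear f" "S \<in> lmeasurable"
  shows measurable_linear_image': "(f ` S) \<in> lmeasurable"
    and measure_linear_image': "measure lebesgue (f ` S) = \<bar>det (matrix f)\<bar> * measure lebesgue S" (is "?Q f S")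
proof -
  have "\<forall>S \<in> lmeasurable. (f ` S) \<in> lmeasurable \<and> ?Q f S"
  proof (rule induct_linear_elementary [OF \<open>linear f\<close>]; intro ballI)
    fix f g and S :: "(real,'n) vec set"
    assume "linear f" and "linear g"
      and f [rule_format]: "\<forall>S \<in> lmeasurable. f ` S \<in> lmeasurable \<and> ?Q f S"
      and g [rule_format]: "\<forall>S \<in> lmeasurable. g ` S \<in> lmeasurable \<and> ?Q g S"
      and S: "S \<in> lmeasurable"
    then have gS: "g ` S \<in> lmeasurable"
      by blast
    show "(f \<circ> g) ` S \<in> lmeasurable \<and> ?Q (f \<circ> g) S"
      using f [OF gS] g [OF S] matrix_compose [OF \<open>linear g\<close> \<open>linear f\<close>]
      by (simp add: o_def image_comp abs_mult det_mul)
  next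
    fix f :: "real^'n::_ \<Rightarrow> real^'n::_" and i and S :: "(real^'n::_) set"
    assume "linear f" and 0: "\<And>x. f x $ i = 0" and "S \<in> lmeasurable"
    then have "\<not> inj f"
      by (metis (full_types) linear_injective_imp_surjective one_neq_zero surjE vec_component)
    have detf: "det (matrix f) = 0"
      using \<open>\<not> inj f\<close> det_nz_iff_inj[OF \<open>linear f\<close>] by blast
    show "f ` S \<in> lmeasurable \<and> ?Q f S"
    proof
      show "f ` S \<in> lmeasurable"
        using lmeasurable_iff_indicator_has_integral \<open>linear f\<close> \<open>\<not> inj f\<close> negligible_UNIV negligible_linear_singular_image by blast
      have "measure lebesgue (f ` S) = 0"
        by (meson \<open>\<not> inj f\<close> \<open>linear f\<close> negligible_imp_measure0 negligible_linear_singular_image)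
      also have "\<dots> = \<bar>det (matrix f)\<bar> * measure lebesgue S"
        by (simp add: detf)
      finally show "?Q f S" .
    qed
  next
    fix c and S :: "(real^'n::_) set"
    assume "S \<in> lmeasurable"
    show "(\<lambda>a. \<chi> i. c i * a $ i) ` S \<in> lmeasurable \<and> ?Q (\<lambda>a. \<chi> i. c i * a $ i) S"
    proof
      show "(\<lambda>a. \<chi> i. c i * a $ i) ` S \<in> lmeasurable"
        by (simp add: \<open>S \<in> lmeasurable\<close> measurable_stretch)
      show "?Q (\<lambda>a. \<chi> i. c i * a $ i) S"
        by (simp add: measure_stretch [OF \<open>S \<in> lmeasurable\<close>, of c] axis_def matrix_def det_diagonal)
    qed
  next
    fix m :: "'n" and n :: "'n" and S :: "(real, 'n) vec set"
    assume "m \<noteq> n" and "S \<in> lmeasurable"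
    let ?h = "\<lambda>v::(real, 'n) vec. \<chi> i. v $ Transposition.transpose m n i"
    have lin: "linear ?h"
      by (rule linearI) (simp_all add: plus_vec_def scaleR_vec_def)
    have meq: "measure lebesgue ((\<lambda>v::(real, 'n) vec. \<chi> i. v $ Transposition.transpose m n i) ` cbox a b)
             = measure lebesgue (cbox a b)" for a b
    proof (cases "cbox a b = {}")
      case True then show ?thesis
        by simp
    next
      case False
      then have him: "?h ` (cbox a b) \<noteq> {}"
        by blast
      have eq: "?h ` (cbox a b) = cbox (?h a) (?h b)"
        by (auto simp: image_iff lambda_swap_Galois mem_box_cart) (metis transpose_involutory)+
      show ?thesis
        using him prod.permute [OF permutes_swap_id, where S=UNIV and g="\<lambda>i. (b - a)$i", symmetric]
        by (simp add: eq content_cbox_cart False)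
    qed
    have "(\<chi> i j. if Transposition.transpose m n i = j then 1 else 0) = (\<chi> i j. if j = Transposition.transpose m n i then 1 else (0::real))"
      by (auto intro!: Cart_lambda_cong)
    then have "matrix ?h = transpose(\<chi> i j. mat 1 $ i $ Transposition.transpose m n j)"
      by (auto simp: matrix_eq transpose_def axis_def mat_def matrix_def)
    then have 1: "\<bar>det (matrix ?h)\<bar> = 1"
      by (simp add: det_permute_columns permutes_swap_id sign_swap_id abs_mult)
    show "?h ` S \<in> lmeasurable \<and> ?Q ?h S"
      using measure_linear_sufficient [OF lin \<open>S \<in> lmeasurable\<close>] meq 1 by force
  next
    fix m n :: "'n" and S :: "(real, 'n) vec set"
    assume "m \<noteq> n" and "S \<in> lmeasurable"
    let ?h = "\<lambda>v::(real, 'n) vec. \<chi> i. if i = m then v $ m + v $ n else v $ i"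
    have lin: "linear ?h"
      by (rule linearI) (auto simp: algebra_simps plus_vec_def scaleR_vec_def vec_eq_iff)
    have 1: "det(matrix ?h) = 1" by (rule det_shear_aux[OF \<open>m \<noteq> n\<close>])
    have meq: "measure lebesgue (?h ` (cbox a b)) = measure lebesgue (cbox a b)" for a b
    proof (cases "cbox a b = {}")
      case True then show ?thesis by simp
    next
      case False
      then have ne: "(+) (\<chi> i. if i = n then - a $ n else 0) ` cbox a b \<noteq> {}"
        by auto
      let ?v = "\<chi> i. if i = n then - a $ n else 0"
      have "?h ` cbox a b
            = (+) (\<chi> i. if i = m \<or> i = n then a $ n else 0) ` ?h ` (+) ?v ` (cbox a b)"
        using \<open>m \<noteq> n\<close> unfolding image_comp o_def by (force simp: vec_eq_iff)
      then have "measure lebesgue (?h ` (cbox a b))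
               = measure lebesgue ((\<lambda>v. \<chi> i. if i = m then v $ m + v $ n else v $ i) `
                                   (+) ?v ` cbox a b)"
        by (rule ssubst) (rule measure_translation)
      also have "\<dots> = measure lebesgue ((\<lambda>v. \<chi> i. if i = m then v $ m + v $ n else v $ i) ` cbox (?v +a) (?v + b))"
        by (metis (no_types, lifting) cbox_translation)
      also have "\<dots> = measure lebesgue ((+) ?v ` cbox a b)"
        apply (subst measure_shear_interval)
        using \<open>m \<noteq> n\<close> ne apply auto
        apply (simp add: cbox_translation)
        by (metis cbox_borel cbox_translation measure_completion sets_lborel)
      also have "\<dots> = measure lebesgue (cbox a b)"
        by (rule measure_translation)
        finally show ?thesis .
      qed
    show "?h ` S \<in> lmeasurable \<and> ?Q ?h S"
      using measure_linear_sufficient [OF lin \<open>S \<in> lmeasurable\<close>] meq 1 by force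
  qed
  with assms show "(f ` S) \<in> lmeasurable" "?Q f S"
    by metis+
qed

theorem content_simplex':
  fixes X :: "(real ^ 'n :: finite) set" and f :: "'n :: _ \<Rightarrow> real ^ ('n :: _)"
  assumes "finite X" "card X = Suc CARD('n)" and x0: "x0 \<in> X" and bij: "bij_betw f UNIV (X - {x0})"
  defines "M \<equiv> (\<chi> i. \<chi> j. f j $ i - x0 $ i)"
  shows "measure lborel (convex hull X) = \<bar>det M\<bar> / fact (CARD('n))"
proof -
  define g where "g = (\<lambda>x. M *v x)"
  have [simp]: "M *v axis i 1 = f i - x0" for i :: 'n
    by (simp add: M_def matrix_vector_mult_basis column_def vec_eq_iff)
  define std where "std = (convex hull insert 0 Basis :: (real ^ 'n :: _) set)"
  have compact: "compact std" unfolding std_def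
    by (intro finite_imp_compact_convex_hull) auto

  have "measure lebesgue (convex hull X) = measure lebesgue (((+) (-x0)) ` (convex hull X))"
    by (rule measure_translation [symmetric])
  also have "((+) (-x0)) ` (convex hull X) = convex hull (((+) (-x0)) ` X)"
    by (rule convex_hull_translation [symmetric])
  also have "((+) (-x0)) ` X = insert 0 ((\<lambda>x. x - x0) ` (X - {x0}))"
    using x0 by (auto simp: image_iff)
  finally have eq: "measure lebesgue (convex hull X) = measure lebesgue (convex hull \<dots>)" .
  have stdm: "std \<in> lmeasurable" using compact
    by (simp add: compact_imp_closed compact_imp_bounded lmeasurable_compact)
  have "measure lebesgue (g ` std) = \<bar>det M\<bar> * measure lebesgue std"
    using measure_linear_image'[of g std] stdm by (simp add: g_def)
  also have "measure lebesgue std = measure lborel std" using compact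
    by (intro measure_completion) (auto dest: compact_imp_closed)
  also have "measure lborel std = 1 / fact CARD('n)" unfolding std_def
    by (simp add: content_std_simplex)
  also have "g ` std = convex hull (g ` insert 0 Basis)" unfolding std_def
    by (rule convex_hull_linear_image) (auto simp: g_def)
  also have "g ` insert 0 Basis = insert 0 (g ` Basis)"
    by (auto simp: g_def)
  also have "g ` Basis = (\<lambda>x. x - x0) ` range f"
    by (auto simp: g_def Basis_vec_def image_iff)
  also have "range f = X - {x0}" using bij
    using bij_betw_imp_surj_on by blast
  also note eq [symmetric]
  finally have "measure lebesgue (convex hull X) = \<bar>det M\<bar> / fact (CARD('n))" by simp
  moreover have "measure lebesgue (convex hull X) = measure lborel (convex hull X)"
    using finite_imp_compact_convex_hull[OF \<open>finite X\<close>]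
    by (intro measure_completion) (auto dest: compact_imp_closed)
  ultimately show ?thesis by simp
qed




lemma row_chi[simp]: "row i ((\<chi> k. a k) :: 'a::zero^'n^'m) = a i"
  by (simp add: row_def vec_eq_iff)

lemma det_abs_bij:
  fixes g h :: "'n::finite \<Rightarrow> real^'n"
  assumes g: "bij_betw g UNIV T" and h: "bij_betw h UNIV T"
  shows "\<bar>det (\<chi> i. g i)\<bar> = \<bar>det (\<chi> i. h i)\<bar>"
proof -
  define p where "p = inv_into UNIV g \<circ> h"
  have "bij_betw (inv_into UNIV g) T UNIV" by (rule bij_betw_inv_into[OF g])
  then have "bij_betw p UNIV UNIV" unfolding p_def using h by (rule bij_betw_trans[rotated])
  then have "bij p" by simp
  then have pp: "p permutes UNIV" by (simp add: permutes_univ bij_iff)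
  have hp: "h i = g (p i)" for i
  proof -
    have "h i \<in> T" using bij_betw_apply[OF h] by simp
    then show ?thesis unfolding p_def using g by (simp add: bij_betw_inv_into_right)
  qed
  have "det (\<chi> i. h i) = det (\<chi> i. (\<chi> k. g k) $ p i)" by (simp add: hp)
  also have "\<dots> = of_int (sign p) * det (\<chi> i. g i)" by (rule det_permute_rows[OF pp])
  finally show ?thesis by (simp add: abs_mult sign_def)
qed

lemma det_row_replace_sum:
  fixes a :: "'n::finite \<Rightarrow> real^'n"
  shows "det (\<chi> i. if i = j then (\<Sum>k\<in>UNIV. c k *\<^sub>R a k) else a i) = c j * det (\<chi> i. a i)"
proof -
  have "det (\<chi> i. if i = j then (\<Sum>k\<in>UNIV. (\<chi> k. c k) $ k *s row k (\<chi> i. a i)) else row i (\<chi> i. a i))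
       = (\<chi> k. c k) $ j * det (\<chi> i. a i)"
    by (rule cramer_lemma_transpose)
  then show ?thesis by (simp add: scalar_mult_eq_scaleR cong: if_cong)
qed

lemma det_rowop_set:
  fixes a :: "'n::finite \<Rightarrow> real^'n"
  assumes "j \<notin> T"
  shows "det (\<chi> i. if i = j then s else if i \<in> T then a i + s else a i) = det (\<chi> i. if i = j then s else a i)"
proof -
  have "finite T" by simp
  then show ?thesis using assms
  proof (induction T rule: finite_induct)
    case empty then show ?case by (simp cong: if_cong)
  next
    case (insert t T)
    define A where "A = (\<chi> i. if i = j then s else if i \<in> T then a i + s else a i)"
    have tj: "t \<noteq> j" using insert by auto
    have "(\<chi> i. if i = j then s else if i \<in> insert t T then a i + s else a i)
        = (\<chi> k. if k = t then row t A + 1 *s row j A else row k A)"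
      using insert tj by (auto simp: A_def vec_eq_iff row_def)
    then have "det (\<chi> i. if i = j then s else if i \<in> insert t T then a i + s else a i) = det A"
      using det_row_operation[OF tj, where c=1 and A=A] by simp
    then show ?case using insert by (simp add: A_def)
  qed
qed

lemma det_rank1:
  fixes a :: "'n::finite \<Rightarrow> real^'n"
  shows "det (\<chi> i. a i + (\<Sum>k\<in>UNIV. c k *\<^sub>R a k)) = (1 + sum c UNIV) * det (\<chi> i. a i)"
proof -
  define s where "s = (\<Sum>k\<in>UNIV. c k *\<^sub>R a k)"
  have "det (\<chi> i. if i \<in> T then a i + s else a i) = (1 + sum c T) * det (\<chi> i. a i)" for T
  proof -
    have "finite T" by simp
    then show ?thesis
    proof (induction T rule: finite_induct)
      case empty then show ?case by simp
    next
      case (insert j T)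
      have "det (\<chi> i. if i \<in> insert j T then a i + s else a i)
          = det (\<chi> i. if i = j then a i + s else (if i \<in> T then a i + s else a i))"
        by (metis insert_iff)
      also have "\<dots> = det (\<chi> i. if i = j then a i else (if i \<in> T then a i + s else a i))
                    + det (\<chi> i. if i = j then s else (if i \<in> T then a i + s else a i))"
        by (rule det_row_add)
      also have "(\<chi> i. if i = j then a i else (if i \<in> T then a i + s else a i)) = (\<chi> i. if i \<in> T then a i + s else a i)"
        using insert by (auto simp: vec_eq_iff)
      also have "det (\<chi> i. if i = j then s else (if i \<in> T then a i + s else a i)) = det (\<chi> i. if i = j then s else a i)"
        by (rule det_rowop_set) (use insert in auto)
      also have "\<dots> = c j * det (\<chi> i. a i)" unfolding s_def by (rule det_row_replace_sum)
      finally show ?case using insert by (simp add: algebra_simps)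
    qed
  qed
  from this[of UNIV] show ?thesis by (simp add: s_def)
qed




locale ipsx =
  fixes V :: "(real^'n::finite) set" and w :: "real^'n" and f :: "'n \<Rightarrow> real^'n" and \<mu> :: "real^'n \<Rightarrow> real"
  assumes finV: "finite V" and cardV: "card V = Suc CARD('n)" and indep: "\<not> affine_dependent V"
    and wV: "w \<in> V" and bij: "bij_betw f UNIV (V - {w})"
    and mupos: "\<And>x. x \<in> V \<Longrightarrow> 0 < \<mu> x" and musum: "sum \<mu> V = 1" and mu0: "(\<Sum>x\<in>V. \<mu> x *\<^sub>R x) = 0"
begin

lemma fV: "f i \<in> V" and fw: "f i \<noteq> w" using bij_betw_apply[OF bij, of i] by auto

lemma finj: "inj f" using bij by (simp add: bij_betw_def)

lemma f_eq[simp]: "f i = f j \<longleftrightarrow> i = j" using finj by (auto dest: injD)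

lemma sumV: "(\<Sum>x\<in>V. g x) = g w + (\<Sum>i\<in>UNIV. g (f i))"
proof -
  have "(\<Sum>x\<in>V. g x) = g w + (\<Sum>x\<in>V - {w}. g x)" by (rule sum.remove[OF finV wV])
  also have "(\<Sum>x\<in>V - {w}. g x) = (\<Sum>i\<in>UNIV. g (f i))"
    by (rule sum.reindex_bij_betw[OF bij, symmetric])
  finally show ?thesis .
qed

lemma prodV: "(\<Prod>x\<in>V. g x) = g w * (\<Prod>i\<in>UNIV. g (f i))"
proof -
  have "(\<Prod>x\<in>V. g x) = g w * (\<Prod>x\<in>V - {w}. g x)" by (rule prod.remove[OF finV wV])
  also have "(\<Prod>x\<in>V - {w}. g x) = (\<Prod>i\<in>UNIV. g (f i))"
    by (rule prod.reindex_bij_betw[OF bij, symmetric])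
  finally show ?thesis .
qed

lemma V_cases: assumes "y \<in> V" obtains "y = w" | i where "y = f i"
proof -
  have "y \<noteq> w \<Longrightarrow> y \<in> f ` UNIV" using assms bij by (auto simp: bij_betw_def)
  then show ?thesis using that by blast
qed

lemma mu_nz[simp]: "x \<in> V \<Longrightarrow> \<mu> x \<noteq> 0" using mupos by force
lemma fV'[simp]: "f i \<in> V" by (rule fV)
lemma muw: "0 < \<mu> w" using mupos wV by blast
lemma muf: "0 < \<mu> (f i)" using mupos fV by blast

lemma sum_muf: "(\<Sum>i\<in>UNIV. \<mu> (f i)) = 1 - \<mu> w" using musum sumV[of \<mu>] by simp

lemma w_eq: "w = (\<Sum>k\<in>UNIV. (- (\<mu> (f k) / \<mu> w)) *\<^sub>R f k)"
proof -
  have "\<mu> w *\<^sub>R w + (\<Sum>i\<in>UNIV. \<mu> (f i) *\<^sub>R f i) = 0" using mu0 sumV[of "\<lambda>x. \<mu> x *\<^sub>R x"] by simp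
  then have "(\<Sum>i\<in>UNIV. \<mu> (f i) *\<^sub>R f i) = - (\<mu> w *\<^sub>R w)"
    by (simp add: add.commute add_eq_0_iff)
  then have "w = - (1 / \<mu> w) *\<^sub>R (\<Sum>i\<in>UNIV. \<mu> (f i) *\<^sub>R f i)" using muw
    by simp
  also have "\<dots> = (\<Sum>k\<in>UNIV. (- (\<mu> (f k) / \<mu> w)) *\<^sub>R f k)"
    by (simp add: scaleR_sum_right)
  finally show ?thesis .
qed

definition "M = (\<chi> i. f i)"
definition "M' = (\<chi> i. f i - w)"

lemma detM': "det M' = det M / \<mu> w"
proof -
  have "M' = (\<chi> i. f i + (\<Sum>k\<in>UNIV. (\<mu> (f k) / \<mu> w) *\<^sub>R f k))"
    unfolding M'_def by (subst w_eq) (simp add: sum_negf)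
  then have "det M' = (1 + (\<Sum>k\<in>UNIV. \<mu> (f k) / \<mu> w)) * det M"
    unfolding M_def by (simp add: det_rank1)
  also have "1 + (\<Sum>k\<in>UNIV. \<mu> (f k) / \<mu> w) = 1 / \<mu> w"
    using muw by (simp add: sum_divide_distrib[symmetric] sum_muf field_simps)
  finally show ?thesis by simp
qed

lemma detM'_nz: "det M' \<noteq> 0"
proof
  assume "det M' = 0"
  then have "det (matrix ((*v) (transpose M'))) = 0" by simp
  then have "\<not> inj ((*v) (transpose M'))"
    using det_nz_iff_inj[OF matrix_vector_mul_linear] by blast
  then obtain z1 z2 where "z1 \<noteq> z2" "transpose M' *v z1 = transpose M' *v z2"
    by (auto simp: inj_def)
  then obtain z where z: "z \<noteq> 0" "transpose M' *v z = 0"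
    by (metis eq_iff_diff_eq_0 matrix_vector_mult_diff_distrib)
  have cz: "(\<Sum>i\<in>UNIV. z$i *\<^sub>R (f i - w)) = 0"
    using z(2) unfolding matrix_mult_sum by (simp add: M'_def scalar_mult_eq_scaleR column_transpose)
  obtain i0 where i0: "z$i0 \<noteq> 0" using z(1) by (auto simp: vec_eq_iff)
  define a where "a y = (if y = w then - (\<Sum>i\<in>UNIV. z$i) else z $ (inv f y))" for y
  have af: "a (f i) = z$i" for i using fw[of i] finj by (simp add: a_def)
  have aw: "a w = - (\<Sum>i\<in>UNIV. z$i)" by (simp add: a_def)
  have "sum a V = 0" using sumV[of a] by (simp add: af aw)
  moreover have "(\<Sum>y\<in>V. a y *\<^sub>R y) = 0"
  proof -
    have "(\<Sum>y\<in>V. a y *\<^sub>R y) = (- (\<Sum>i\<in>UNIV. z$i)) *\<^sub>R w + (\<Sum>i\<in>UNIV. z$i *\<^sub>R f i)"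
      using sumV[of "\<lambda>y. a y *\<^sub>R y"] by (simp add: af aw)
    also have "\<dots> = (\<Sum>i\<in>UNIV. z$i *\<^sub>R (f i - w))"
      by (simp add: scaleR_diff_right sum_subtractf scaleR_sum_left)
    finally show ?thesis using cz by simp
  qed
  moreover have "\<exists>v\<in>V. a v \<noteq> 0" using i0 af fV by metis
  ultimately have "affine_dependent V" using affine_dependent_explicit_finite[OF finV] by blast
  then show False using indep by simp
qed

lemma detM_nz: "det M \<noteq> 0" using detM'_nz detM' by auto

lemma volV: "measure lborel (convex hull V) = \<bar>det M\<bar> / \<mu> w / fact CARD('n)"
proof -
  have "measure lborel (convex hull V) = \<bar>det (\<chi> i j. f j $ i - w $ i)\<bar> / fact CARD('n)"
    by (rule content_simplex'[OF finV cardV wV bij])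
  also have "(\<chi> i j. f j $ i - w $ i) = transpose M'"
    by (simp add: M'_def transpose_def vec_eq_iff)
  finally show ?thesis using muw by (simp add: detM' abs_div)
qed

lemma h_eq:
  fixes h :: "real^'n \<Rightarrow> real^'n"
  assumes h0: "(\<Sum>x\<in>V. \<mu> x *\<^sub>R h x) = 0"
  shows "h w = (\<Sum>k\<in>UNIV. (- (\<mu> (f k) / \<mu> w)) *\<^sub>R h (f k))"
proof -
  have "\<mu> w *\<^sub>R h w + (\<Sum>i\<in>UNIV. \<mu> (f i) *\<^sub>R h (f i)) = 0" using h0 sumV[of "\<lambda>x. \<mu> x *\<^sub>R h x"] by simp
  then have "(\<Sum>i\<in>UNIV. \<mu> (f i) *\<^sub>R h (f i)) = - (\<mu> w *\<^sub>R h w)"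
    by (simp add: add.commute add_eq_0_iff)
  then have "h w = - (1 / \<mu> w) *\<^sub>R (\<Sum>i\<in>UNIV. \<mu> (f i) *\<^sub>R h (f i))" using muw
    by simp
  also have "\<dots> = (\<Sum>k\<in>UNIV. (- (\<mu> (f k) / \<mu> w)) *\<^sub>R h (f k))"
    by (simp add: scaleR_sum_right)
  finally show ?thesis .
qed

definition "sig j = (\<lambda>i. if i = j then w else f i)"

lemma sig_bij: "bij_betw (sig j) UNIV (V - {f j})"
  unfolding bij_betw_def
proof
  show "inj (sig j)" unfolding sig_def inj_def using fw by (metis f_eq)
  show "range (sig j) = V - {f j}"
  proof
    show "range (sig j) \<subseteq> V - {f j}" using fV fw wV by (auto simp: sig_def)
    show "V - {f j} \<subseteq> range (sig j)"
    proof
      fix y assume y: "y \<in> V - {f j}"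
      then have yV: "y \<in> V" by simp
      show "y \<in> range (sig j)"
      proof (cases rule: V_cases[OF yV])
        case 1 then show ?thesis by (metis rangeI sig_def)
      next
        case (2 i) then show ?thesis using y by (metis DiffD2 rangeI sig_def singletonI)
      qed
    qed
  qed
qed

lemma weight_gen:
  fixes h :: "real^'n \<Rightarrow> real^'n"
  assumes h0: "(\<Sum>x\<in>V. \<mu> x *\<^sub>R h x) = 0" and hinj: "inj_on h V" and x: "x \<in> V"
  shows "\<exists>g. bij_betw g UNIV (h ` V - {h x}) \<and> \<bar>det (\<chi> i. g i)\<bar> = \<mu> x / \<mu> w * \<bar>det (\<chi> i. h (f i))\<bar>"
proof (cases rule: V_cases[OF x])
  case 1
  have "bij_betw h (V - {w}) (h ` (V - {w}))" using hinj by (meson Diff_subset inj_on_imp_bij_betw inj_on_subset)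
  moreover have "h ` (V - {w}) = h ` V - {h w}" using hinj wV by (auto simp: inj_on_def)
  ultimately have "bij_betw (h \<circ> f) UNIV (h ` V - {h w})" using bij bij_betw_trans by metis
  then show ?thesis using 1 muw by (intro exI[of _ "h \<circ> f"]) auto
next
  case (2 j)
  have "bij_betw h (V - {f j}) (h ` (V - {f j}))" using hinj by (meson Diff_subset inj_on_imp_bij_betw inj_on_subset)
  moreover have "h ` (V - {f j}) = h ` V - {h (f j)}" using hinj fV by (auto simp: inj_on_def)
  ultimately have b: "bij_betw (h \<circ> sig j) UNIV (h ` V - {h (f j)})" using sig_bij bij_betw_trans by metis
  have hw: "h w = (\<Sum>k\<in>UNIV. (- (\<mu> (f k) / \<mu> w)) *\<^sub>R h (f k))" by (rule h_eq[OF h0])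
  have "(\<lambda>i. (h \<circ> sig j) i) = (\<lambda>i. if i = j then (\<Sum>k\<in>UNIV. (- (\<mu> (f k) / \<mu> w)) *\<^sub>R h (f k)) else h (f i))"
    by (rule ext) (auto simp: sig_def hw)
  then have "det (\<chi> i. (h \<circ> sig j) i) = det (\<chi> i. if i = j then (\<Sum>k\<in>UNIV. (- (\<mu> (f k) / \<mu> w)) *\<^sub>R h (f k)) else h (f i))"
    by metis
  also have "\<dots> = (- (\<mu> (f j) / \<mu> w)) * det (\<chi> i. h (f i))"
    by (rule det_row_replace_sum[where a="\<lambda>k. h (f k)"])
  finally show ?thesis using 2 b muw muf[of j]
    by (intro exI[of _ "h \<circ> sig j"]) (simp add: abs_mult)
qed

definition "Minv = (SOME B. M ** B = mat 1 \<and> B ** M = mat 1)"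

lemma Minv: "M ** Minv = mat 1" "Minv ** M = mat 1"
proof -
  have "invertible M" using detM_nz by (simp add: invertible_det_nz)
  then have "\<exists>B. M ** B = mat 1 \<and> B ** M = mat 1" by (simp add: invertible_def)
  from someI_ex[OF this] show "M ** Minv = mat 1" "Minv ** M = mat 1" by (auto simp: Minv_def)
qed

lemma Mv: "(M *v z) $ i = f i \<bullet> z" by (simp add: M_def matrix_vector_mul_component)

lemma spanV: assumes "\<And>y. y \<in> V \<Longrightarrow> z \<bullet> y = 0" shows "z = 0"
proof -
  have "\<forall>i. f i \<bullet> z = 0" using assms fV by (metis inner_commute)
  then have "M *v z = 0" by (simp add: vec_eq_iff Mv)
  then have "Minv *v (M *v z) = 0" by simp
  then show ?thesis by (simp add: matrix_vector_mul_assoc Minv)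
qed

definition "pr x y = (if y = x then 1 / \<mu> x - 1 else -1)"
definition "u x = Minv *v (\<chi> i. pr x (f i))"

lemma u_f: "u x \<bullet> f i = pr x (f i)"
proof -
  have "M *v u x = (\<chi> i. pr x (f i))" by (simp add: u_def matrix_vector_mul_assoc Minv)
  then show ?thesis using Mv[of "u x" i] by (simp add: inner_commute)
qed

lemma u_pair: assumes "x \<in> V" "y \<in> V" shows "u x \<bullet> y = pr x y"
proof (cases rule: V_cases[OF assms(2)])
  case 2 then show ?thesis using u_f by simp
next
  case 1
  have "u x \<bullet> w = (\<Sum>k\<in>UNIV. (- (\<mu> (f k) / \<mu> w)) * pr x (f k))"
    by (subst w_eq) (simp add: inner_sum_right u_f)
  also have "\<dots> = - (\<Sum>k\<in>UNIV. \<mu> (f k) * pr x (f k)) / \<mu> w"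
    by (simp add: sum_divide_distrib sum_negf)
  also have "(\<Sum>k\<in>UNIV. \<mu> (f k) * pr x (f k)) = (\<Sum>k\<in>UNIV. (if f k = x then 1 else 0) - \<mu> (f k))"
    using mupos fV by (intro sum.cong) (auto simp: pr_def field_simps)
  also have "\<dots> = (if x = w then 0 else 1) - (1 - \<mu> w)"
  proof -
    have "(\<Sum>k\<in>UNIV. (if f k = x then 1 else 0::real)) = (if x = w then 0 else 1)"
    proof (cases rule: V_cases[OF assms(1)])
      case 1 then show ?thesis using fw by simp
    next
      case (2 j)
      then have "(\<Sum>k\<in>UNIV. (if f k = x then 1 else 0::real)) = (\<Sum>k\<in>UNIV. (if k = j then 1 else 0))" by simp
      then show ?thesis using 2 fw by simp
    qed
    then show ?thesis by (simp add: sum_subtractf sum_muf)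
  qed
  finally have e: "u x \<bullet> w = - ((if x = w then 0 else 1) - (1 - \<mu> w)) / \<mu> w" .
  show ?thesis
  proof (cases "x = w")
    case True then show ?thesis using 1 e muw by (simp add: pr_def diff_divide_distrib)
  next
    case False then show ?thesis using 1 e muw by (simp add: pr_def)
  qed
qed

lemma u_sum0: "(\<Sum>x\<in>V. \<mu> x *\<^sub>R u x) = 0"
proof (rule spanV)
  fix y assume y: "y \<in> V"
  have "(\<Sum>x\<in>V. \<mu> x *\<^sub>R u x) \<bullet> y = (\<Sum>x\<in>V. \<mu> x * pr x y)"
    using y by (simp add: inner_sum_left u_pair)
  also have "\<dots> = (\<Sum>x\<in>V. (if x = y then 1 else 0) - \<mu> x)"
    using mupos y by (intro sum.cong) (auto simp: pr_def field_simps)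
  also have "\<dots> = 0" using y finV musum by (simp add: sum_subtractf)
  finally show "(\<Sum>x\<in>V. \<mu> x *\<^sub>R u x) \<bullet> y = 0" .
qed

lemma u_inj: "inj_on u V"
proof (rule inj_onI)
  fix x y assume xy: "x \<in> V" "y \<in> V" "u x = u y"
  have a: "u x \<bullet> x = 1 / \<mu> x - 1" using u_pair[OF xy(1) xy(1)] by (simp add: pr_def)
  have "1 / \<mu> x > 0" using mupos xy by simp
  show "x = y"
  proof (rule ccontr)
    assume "x \<noteq> y"
    then have "u y \<bullet> x = -1" using u_pair[OF xy(2) xy(1)] by (simp add: pr_def)
    then show False using a xy(3) \<open>1 / \<mu> x > 0\<close> by simp
  qed
qed

end



lemma dual_hull: "dual (convex hull W) = {z. \<forall>x\<in>W. -1 \<le> z \<bullet> x}"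
proof
  show "dual (convex hull W) \<subseteq> {z. \<forall>x\<in>W. -1 \<le> z \<bullet> x}"
    unfolding dual_def by (auto intro: hull_inc)
  show "{z. \<forall>x\<in>W. -1 \<le> z \<bullet> x} \<subseteq> dual (convex hull W)"
  proof
    fix z assume z: "z \<in> {z. \<forall>x\<in>W. -1 \<le> z \<bullet> x}"
    have "convex {v. -1 \<le> z \<bullet> v}" by (rule convex_halfspace_ge)
    then have "convex hull W \<subseteq> {v. -1 \<le> z \<bullet> v}" using z by (intro hull_minimal) auto
    then show "z \<in> dual (convex hull W)" unfolding dual_def by auto
  qed
qed

lemma convex_polar: "convex {z. \<forall>x\<in>W. (-1::real) \<le> z \<bullet> x}"
proof -
  have "{z. \<forall>x\<in>W. (-1::real) \<le> z \<bullet> x} = (\<Inter>x\<in>W. {z. -1 \<le> z \<bullet> x})" by auto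
  moreover have "convex {z. (-1::real) \<le> z \<bullet> x}" for x :: "'a::real_inner"
    using convex_halfspace_ge[of "-1" x] by (simp add: inner_commute)
  ultimately show ?thesis by (auto intro: convex_INT)
qed

context ipsx begin

definition "U = u ` V"

lemma finU: "finite U" unfolding U_def using finV by simp
lemma cardU: "card U = Suc CARD('n)" unfolding U_def using cardV u_inj card_image by metis

lemma sum_U: "sum g U = (\<Sum>x\<in>V. g (u x))" unfolding U_def by (simp add: sum.reindex[OF u_inj])

lemma pr_alt: "pr x y = (if x = y then 1 / \<mu> x else 0) - 1" by (auto simp: pr_def)

lemma sum_pr1: assumes y: "y \<in> V" shows "(\<Sum>x\<in>V. c x * pr x y) = c y / \<mu> y - sum c V"
proof -
  have "(\<Sum>x\<in>V. c x * pr x y) = (\<Sum>x\<in>V. (if x = y then c x / \<mu> x else 0) - c x)"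
    by (rule sum.cong) (auto simp: pr_def right_diff_distrib)
  then show ?thesis using y finV by (simp add: sum_subtractf)
qed

lemma sum_pr2: assumes x: "x \<in> V" shows "(\<Sum>y\<in>V. c y * pr x y) = c x / \<mu> x - sum c V"
proof -
  have "(\<Sum>y\<in>V. c y * pr x y) = (\<Sum>y\<in>V. (if y = x then c y / \<mu> y else 0) - c y)"
    by (rule sum.cong) (auto simp: pr_def right_diff_distrib)
  then show ?thesis using x finV by (simp add: sum_subtractf)
qed

lemma indepU: "\<not> affine_dependent U"
proof
  assume "affine_dependent U"
  then obtain a where a: "sum a U = 0" "\<exists>v\<in>U. a v \<noteq> 0" "(\<Sum>v\<in>U. a v *\<^sub>R v) = 0"
    using affine_dependent_explicit_finite[OF finU] by blast
  have s1: "(\<Sum>x\<in>V. a (u x)) = 0" using a(1) sum_U[of a] by simp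
  have s2: "(\<Sum>x\<in>V. a (u x) *\<^sub>R u x) = 0" using a(3) sum_U[of "\<lambda>v. a v *\<^sub>R v"] by simp
  have "a (u y) = 0" if y: "y \<in> V" for y
  proof -
    have "(\<Sum>x\<in>V. a (u x) *\<^sub>R u x) \<bullet> y = (\<Sum>x\<in>V. a (u x) * pr x y)"
      using y by (simp add: inner_sum_left u_pair)
    also have "\<dots> = a (u y) / \<mu> y" using sum_pr1[OF y, of "\<lambda>x. a (u x)"] s1 by simp
    finally show ?thesis using s2 y by simp
  qed
  then show False using a(2) unfolding U_def by auto
qed

definition "Ustar = (\<chi> i. u (f i))"

lemma pr_ff: "pr (f j) (f i) + 1 = (if i = j then 1 / \<mu> (f j) else 0)"
  by (auto simp: pr_def)

lemma detMU: "det M' * det Ustar = (\<Prod>i\<in>UNIV. 1 / \<mu> (f i))"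
proof -
  have "M' ** transpose Ustar = (\<chi> i j. if i = j then 1 / \<mu> (f j) else 0)"
  proof -
    have "(M' ** transpose Ustar) $ i $ j = (f i - w) \<bullet> u (f j)" for i j
      by (simp add: matrix_matrix_mult_def M'_def Ustar_def transpose_def inner_vec_def mult.commute)
    also have "(f i - w) \<bullet> u (f j) = pr (f j) (f i) + 1" for i j
      using u_pair[of "f j" w] u_pair[of "f j" "f i"] wV fw[of j]
      by (simp add: inner_diff_left inner_commute pr_def)
    finally show ?thesis using pr_ff by (simp add: vec_eq_iff)
  qed
  then have "det (M' ** transpose Ustar) = (\<Prod>i\<in>UNIV. 1 / \<mu> (f i))"
    by (simp add: det_diagonal)
  then show ?thesis by (simp add: det_mul)
qed

lemma detUstar_nz: "det Ustar \<noteq> 0"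
proof -
  have "(\<Prod>i\<in>UNIV. 1 / \<mu> (f i)) > 0" by (rule prod_pos) (use muf in auto)
  then show ?thesis using detMU by auto
qed

lemma Uv: "(Ustar *v z) $ i = u (f i) \<bullet> z" by (simp add: Ustar_def matrix_vector_mul_component)

lemma spanU: assumes "\<And>x. x \<in> V \<Longrightarrow> z \<bullet> u x = 0" shows "z = 0"
proof -
  have "invertible Ustar" using detUstar_nz by (simp add: invertible_det_nz)
  then obtain B where B: "B ** Ustar = mat 1" by (auto simp: invertible_def)
  have "\<forall>i. u (f i) \<bullet> z = 0" using assms fV by (metis inner_commute)
  then have "Ustar *v z = 0" by (simp add: vec_eq_iff Uv)
  then have "B *v (Ustar *v z) = 0" by simp
  then show ?thesis by (simp add: matrix_vector_mul_assoc B)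
qed

lemma pr_ge: "x \<in> V \<Longrightarrow> -1 \<le> pr x y"
  using mupos by (auto simp: pr_def less_imp_le)

lemma dualV: "dual (convex hull V) = convex hull U"
proof -
  have "dual (convex hull V) = {z. \<forall>x\<in>V. -1 \<le> z \<bullet> x}" by (rule dual_hull)
  also have "\<dots> = convex hull U"
  proof
    show "convex hull U \<subseteq> {z. \<forall>x\<in>V. -1 \<le> z \<bullet> x}"
      by (rule hull_minimal) (auto simp: U_def u_pair pr_ge convex_polar)
    show "{z. \<forall>x\<in>V. -1 \<le> z \<bullet> x} \<subseteq> convex hull U"
    proof
      fix z assume z: "z \<in> {z. \<forall>x\<in>V. -1 \<le> z \<bullet> x}"
      define \<beta> where "\<beta> x = \<mu> x * (1 + z \<bullet> x)" for x
      have b0: "\<forall>x\<in>V. 0 \<le> \<beta> x"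
      proof
        fix x assume x: "x \<in> V"
        have "0 \<le> 1 + z \<bullet> x" using z x by auto
        moreover have "0 \<le> \<mu> x" using mupos[OF x] by simp
        ultimately show "0 \<le> \<beta> x" by (simp add: \<beta>_def)
      qed
      have b1: "sum \<beta> V = 1"
      proof -
        have "sum \<beta> V = sum \<mu> V + z \<bullet> (\<Sum>x\<in>V. \<mu> x *\<^sub>R x)"
          by (simp add: \<beta>_def distrib_left sum.distrib inner_sum_right)
        then show ?thesis using musum mu0 by simp
      qed
      have b2: "(\<Sum>x\<in>V. \<beta> x *\<^sub>R u x) = z"
      proof -
        have "(\<Sum>x\<in>V. \<beta> x *\<^sub>R u x) - z = 0"
        proof (rule spanV)
          fix y assume y: "y \<in> V"
          have "((\<Sum>x\<in>V. \<beta> x *\<^sub>R u x) - z) \<bullet> y = (\<Sum>x\<in>V. \<beta> x * pr x y) - z \<bullet> y"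
            using y by (simp add: inner_diff_left inner_sum_left u_pair)
          also have "\<dots> = 0" using sum_pr1[OF y, of \<beta>] b1 y by (simp add: \<beta>_def)
          finally show "((\<Sum>x\<in>V. \<beta> x *\<^sub>R u x) - z) \<bullet> y = 0" .
        qed
        then show ?thesis by simp
      qed
      define c where "c v = \<beta> (inv_into V u v)" for v
      have cu: "c (u x) = \<beta> x" if "x \<in> V" for x using that u_inj by (simp add: c_def)
      have "\<forall>v\<in>U. 0 \<le> c v" using b0 by (auto simp: U_def cu)
      moreover have "sum c U = 1" using b1 by (simp add: sum_U cu cong: sum.cong)
      moreover have "(\<Sum>v\<in>U. c v *\<^sub>R v) = z" using b2 by (simp add: sum_U cu cong: sum.cong)
      ultimately have "(\<forall>v\<in>U. 0 \<le> c v) \<and> sum c U = 1 \<and> (\<Sum>v\<in>U. c v *\<^sub>R v) = z" by blast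
      then show "z \<in> convex hull U" unfolding convex_hull_finite[OF finU] by blast
    qed
  qed
  finally show ?thesis .
qed

lemma dualU: "dual (convex hull U) = convex hull V"
proof -
  have "dual (convex hull U) = {z. \<forall>x\<in>U. -1 \<le> z \<bullet> x}" by (rule dual_hull)
  also have "\<dots> = {z. \<forall>x\<in>V. -1 \<le> z \<bullet> u x}" by (auto simp: U_def)
  also have "\<dots> = convex hull V"
  proof
    show "convex hull V \<subseteq> {z. \<forall>x\<in>V. -1 \<le> z \<bullet> u x}"
    proof (rule hull_minimal)
      show "V \<subseteq> {z. \<forall>x\<in>V. -1 \<le> z \<bullet> u x}"
      proof
        fix y assume y: "y \<in> V"
        have "\<forall>x\<in>V. -1 \<le> y \<bullet> u x"
        proof
          fix x assume x: "x \<in> V"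
          have "y \<bullet> u x = pr x y" using u_pair[OF x y] by (simp add: inner_commute)
          then show "-1 \<le> y \<bullet> u x" using pr_ge[OF x] by simp
        qed
        then show "y \<in> {z. \<forall>x\<in>V. -1 \<le> z \<bullet> u x}" by simp
      qed
      have "{z. \<forall>x\<in>V. -1 \<le> z \<bullet> u x} = {z. \<forall>x\<in>U. -1 \<le> z \<bullet> x}" by (auto simp: U_def)
      then show "convex {z. \<forall>x\<in>V. -1 \<le> z \<bullet> u x}" using convex_polar[of U] by simp
    qed
    show "{z. \<forall>x\<in>V. -1 \<le> z \<bullet> u x} \<subseteq> convex hull V"
    proof
      fix z assume z: "z \<in> {z. \<forall>x\<in>V. -1 \<le> z \<bullet> u x}"
      define \<gamma> where "\<gamma> x = \<mu> x * (1 + z \<bullet> u x)" for x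
      have b0: "\<forall>x\<in>V. 0 \<le> \<gamma> x"
      proof
        fix x assume x: "x \<in> V"
        have "0 \<le> 1 + z \<bullet> u x" using z x by auto
        moreover have "0 \<le> \<mu> x" using mupos[OF x] by simp
        ultimately show "0 \<le> \<gamma> x" by (simp add: \<gamma>_def)
      qed
      have b1: "sum \<gamma> V = 1"
      proof -
        have "sum \<gamma> V = sum \<mu> V + z \<bullet> (\<Sum>x\<in>V. \<mu> x *\<^sub>R u x)"
          by (simp add: \<gamma>_def distrib_left sum.distrib inner_sum_right)
        then show ?thesis using musum u_sum0 by simp
      qed
      have b2: "(\<Sum>x\<in>V. \<gamma> x *\<^sub>R x) = z"
      proof -
        have "(\<Sum>x\<in>V. \<gamma> x *\<^sub>R x) - z = 0"
        proof (rule spanU)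
          fix y assume y: "y \<in> V"
          have xu: "x \<bullet> u y = pr y x" if "x \<in> V" for x using u_pair[OF y that] by (simp add: inner_commute)
          have "((\<Sum>x\<in>V. \<gamma> x *\<^sub>R x) - z) \<bullet> u y = (\<Sum>x\<in>V. \<gamma> x * pr y x) - z \<bullet> u y"
            by (simp add: inner_diff_left inner_sum_left xu cong: sum.cong)
          also have "\<dots> = 0" using sum_pr2[OF y, of \<gamma>] b1 y by (simp add: \<gamma>_def)
          finally show "((\<Sum>x\<in>V. \<gamma> x *\<^sub>R x) - z) \<bullet> u y = 0" .
        qed
        then show ?thesis by simp
      qed
      show "z \<in> convex hull V" unfolding convex_hull_finite[OF finV] using b0 b1 b2 by blast
    qed
  qed
  finally show ?thesis .
qed

lemma uw: "u w \<in> U" using wV by (simp add: U_def)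

lemma bijU: "bij_betw (u \<circ> f) UNIV (U - {u w})"
proof -
  have "bij_betw u (V - {w}) (u ` (V - {w}))" using u_inj by (meson Diff_subset inj_on_imp_bij_betw inj_on_subset)
  moreover have "u ` (V - {w}) = U - {u w}" using u_inj wV by (auto simp: inj_on_def U_def)
  ultimately show ?thesis using bij bij_betw_trans by metis
qed

lemma volU: "measure lborel (convex hull U) = \<bar>det Ustar\<bar> / \<mu> w / fact CARD('n)"
proof -
  have "measure lborel (convex hull U) = \<bar>det (\<chi> i j. (u \<circ> f) j $ i - u w $ i)\<bar> / fact CARD('n)"
    by (rule content_simplex'[OF finU cardU uw bijU])
  also have "(\<chi> i j. (u \<circ> f) j $ i - u w $ i) = transpose (\<chi> i. u (f i) - u w)"
    by (simp add: transpose_def vec_eq_iff)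
  also have "(\<chi> i. u (f i) - u w) = (\<chi> i. u (f i) + (\<Sum>k\<in>UNIV. (\<mu> (f k) / \<mu> w) *\<^sub>R u (f k)))"
    by (subst h_eq[OF u_sum0]) (simp add: sum_negf)
  also have "det (transpose \<dots>) = (1 + (\<Sum>k\<in>UNIV. \<mu> (f k) / \<mu> w)) * det Ustar"
    unfolding Ustar_def det_transpose by (rule det_rank1)
  also have "1 + (\<Sum>k\<in>UNIV. \<mu> (f k) / \<mu> w) = 1 / \<mu> w"
    using muw by (simp add: sum_divide_distrib[symmetric] sum_muf field_simps)
  finally show ?thesis using muw by (simp add: abs_div)
qed

end



lemma rat_denom: assumes "(x::real) \<in> \<rat>" shows "\<exists>k::nat. k \<ge> 1 \<and> real k * x \<in> \<int>"
proof -
  obtain m n where mn: "n \<noteq> 0" "\<bar>x\<bar> = real m / real n" using Rats_abs_nat_div_natE[OF assms] by metis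
  then have "real n * \<bar>x\<bar> = real m" by simp
  then have "real n * x = real m \<or> real n * x = - real m" by (cases "x \<ge> 0") auto
  then have "real n * x \<in> \<int>" by (metis Ints_minus Ints_of_nat)
  then show ?thesis using mn(1) by (intro exI[of _ n]) auto
qed

lemma common_denom: "finite A \<Longrightarrow> (\<forall>x\<in>A. (x::real) \<in> \<rat>) \<Longrightarrow> \<exists>k::nat. k \<ge> 1 \<and> (\<forall>x\<in>A. real k * x \<in> \<int>)"
proof (induction A rule: finite_induct)
  case empty then show ?case by (intro exI[of _ 1]) auto
next
  case (insert a A)
  then obtain k1 where k1: "k1 \<ge> 1" "\<forall>x\<in>A. real k1 * x \<in> \<int>" by auto
  have "a \<in> \<rat>" using insert.prems by simp
  then obtain k2 where k2: "k2 \<ge> 1" "real k2 * a \<in> \<int>" using rat_denom by blast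
  have "\<forall>x\<in>insert a A. real (k1 * k2) * x \<in> \<int>"
  proof
    fix x assume "x \<in> insert a A"
    then consider "x = a" | "x \<in> A" by auto
    then show "real (k1 * k2) * x \<in> \<int>"
    proof cases
      case 1
      have "real (k1 * k2) * x = real k1 * (real k2 * a)" using 1 by simp
      then show ?thesis using k2 by (metis Ints_mult Ints_of_nat)
    next
      case 2
      have "real (k1 * k2) * x = real k2 * (real k1 * x)" by simp
      then show ?thesis using k1 2 by (metis Ints_mult Ints_of_nat)
    qed
  qed
  then show ?case using k1 k2 by (intro exI[of _ "k1 * k2"]) auto
qed

lemma gQ_props:
  assumes "finite (verts S)" "\<forall>v\<in>verts S. rat_vec v"
  shows "gQ S \<ge> 1 \<and> (\<forall>v\<in>verts S. int_vec (real (gQ S) *\<^sub>R v))"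
proof -
  let ?A = "(\<lambda>(v,i). v $ i) ` (verts S \<times> UNIV)"
  have "finite ?A" using assms(1) by simp
  moreover have "\<forall>x\<in>?A. x \<in> \<rat>" using assms(2) by (auto simp: rat_vec_def)
  ultimately obtain k::nat where k: "k \<ge> 1" "\<forall>x\<in>?A. real k * x \<in> \<int>" using common_denom by blast
  have "k \<ge> 1 \<and> (\<forall>v\<in>verts S. int_vec (real k *\<^sub>R v))"
    using k by (auto simp: int_vec_def)
  then show ?thesis unfolding gQ_def by (rule LeastI)
qed

lemma int_vec_inner: "int_vec a \<Longrightarrow> int_vec b \<Longrightarrow> a \<bullet> b \<in> \<int>"
  unfolding inner_vec_def int_vec_def by (auto intro!: Ints_sum Ints_mult)

lemma det_Rats: assumes "\<And>i j. (A :: real^'n^'n) $ i $ j \<in> \<rat>" shows "det A \<in> \<rat>"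
  unfolding det_def using assms by (auto intro!: Rats_sum Rats_mult Rats_prod)

lemma lam_unique:
  fixes l l' :: real and c c' :: "'a \<Rightarrow> nat"
  assumes "V \<noteq> {}" "l \<in> \<rat>" "l' \<in> \<rat>" "l > 0" "l' > 0"
    and "\<forall>v\<in>V. c v > 0" "\<forall>v\<in>V. c' v > 0" "Gcd (c ` V) = 1" "Gcd (c' ` V) = 1"
    and eq: "\<forall>v\<in>V. l * real (c v) = l' * real (c' v)"
  shows "l = l'"
proof -
  have "l / l' \<in> \<rat>" using assms by simp
  then obtain p q :: nat where pq: "q \<noteq> 0" "\<bar>l / l'\<bar> = real p / real q" "coprime p q"
    using Rats_abs_nat_div_natE by metis
  have lpq: "l / l' = real p / real q" using pq assms by simp
  have key: "p * c v = q * c' v" if "v \<in> V" for v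
  proof -
    have "l * real (c v) = l' * real (c' v)" using eq that by auto
    then have "(l / l') * real (c v) = real (c' v)" using assms by (simp add: field_simps)
    then have "real p * real (c v) = real q * real (c' v)" using lpq pq by (simp add: field_simps)
    then show "p * c v = q * c' v" by (metis of_nat_eq_iff of_nat_mult)
  qed
  have "p dvd c' v" if "v \<in> V" for v
  proof -
    have "p dvd q * c' v" using key[OF that] by (metis dvd_triv_left)
    then show ?thesis using pq(3) coprime_dvd_mult_right_iff by blast
  qed
  then have "p dvd Gcd (c' ` V)" by (auto intro!: Gcd_greatest)
  then have p1: "p = 1" using assms by simp
  have "q dvd c v" if "v \<in> V" for v
  proof -
    have "q dvd p * c v" using key[OF that] by (metis dvd_triv_left)
    then show ?thesis using pq(3) by (metis coprime_commute coprime_dvd_mult_right_iff)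
  qed
  then have "q dvd Gcd (c ` V)" by (auto intro!: Gcd_greatest)
  then have "q = 1" using assms by simp
  then show ?thesis using lpq p1 assms by simp
qed

lemma lam_exists:
  fixes \<mu> :: "'a \<Rightarrow> real"
  assumes "finite V" "V \<noteq> {}" "\<forall>x\<in>V. \<mu> x \<in> \<rat> \<and> \<mu> x > 0"
  shows "\<exists>l c. l \<in> \<rat> \<and> l > 0 \<and> (\<forall>x\<in>V. c x > (0::nat) \<and> \<mu> x = l * real (c x)) \<and> Gcd (c ` V) = 1"
proof -
  obtain k::nat where k: "k \<ge> 1" "\<forall>x\<in>\<mu> ` V. real k * x \<in> \<int>"
    using common_denom[of "\<mu> ` V"] assms by auto
  define m where "m x = nat \<lfloor>real k * \<mu> x\<rfloor>" for x
  have km: "real (m x) = real k * \<mu> x" if "x \<in> V" for x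
  proof -
    have "real k * \<mu> x \<in> \<int>" using k that by auto
    moreover have "real k * \<mu> x \<ge> 0" using assms that by auto
    ultimately show ?thesis unfolding m_def by (metis Ints_cases floor_of_int of_int_of_nat_eq of_int_less_0_iff nat_eq_iff2 not_less)
  qed
  have mpos: "m x > 0" if "x \<in> V" for x
  proof -
    have "real k * \<mu> x > 0" using assms that k by auto
    then show ?thesis using km[OF that] by simp
  qed
  define G where "G = Gcd (m ` V)"
  obtain x0 where x0: "x0 \<in> V" using assms(2) by blast
  have "m x0 \<noteq> 0" using mpos[OF x0] by simp
  moreover have "m x0 \<in> m ` V" using x0 by (rule imageI)
  ultimately have "\<not> (m ` V \<subseteq> {0})" by (metis singletonD subsetD)
  then have G0: "G \<noteq> 0" unfolding G_def by (simp add: Gcd_0_iff)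
  have Gd: "G dvd m x" if "x \<in> V" for x unfolding G_def using that by (simp add: Gcd_dvd)
  define c where "c x = m x div G" for x
  have mc: "m x = G * c x" if "x \<in> V" for x using Gd[OF that] by (simp add: c_def)
  have cpos: "c x > 0" if "x \<in> V" for x using mc[OF that] mpos[OF that] by (metis gr0I mult_0_right less_irrefl)
  have e: "m ` V = (*) G ` (c ` V)" using mc by (auto simp: image_iff)
  have "G = Gcd (m ` V)" by (simp add: G_def)
  also have "\<dots> = Gcd ((*) G ` (c ` V))" using e by simp
  also have "\<dots> = G * Gcd (c ` V)" by (simp add: Gcd_mult)
  finally have "G = G * Gcd (c ` V)" .
  then have gc: "Gcd (c ` V) = 1" using G0 by simp
  define l where "l = real G / real k"
  have "l \<in> \<rat>" unfolding l_def by simp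
  moreover have "l > 0" unfolding l_def using G0 k by simp
  moreover have "\<forall>x\<in>V. c x > 0 \<and> \<mu> x = l * real (c x)"
  proof
    fix x assume x: "x \<in> V"
    have "real k * \<mu> x = real G * real (c x)" using km[OF x] mc[OF x] by simp
    then show "c x > 0 \<and> \<mu> x = l * real (c x)" using cpos[OF x] k unfolding l_def by (simp add: field_simps)
  qed
  ultimately show ?thesis using gc by blast
qed

lemma lam_eval:
  fixes S :: "(real^'n::finite) set"
  assumes vS: "verts S = V" and ne: "V \<noteq> {}"
    and K: "K \<in> \<rat>" "K > 0" and wt: "\<forall>x\<in>V. weight S x = K * \<mu> x"
    and l: "l \<in> \<rat>" "l > 0" and c: "\<forall>x\<in>V. c x > (0::nat) \<and> \<mu> x = l * real (c x)" "Gcd (c ` V) = 1"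
  shows "lam S = K * l"
  unfolding lam_def vS
proof (rule the_equality)
  have "\<forall>v\<in>V. 0 < c v \<and> weight S v = K * l * real (c v)"
  proof
    fix v assume v: "v \<in> V"
    then have "weight S v = K * \<mu> v" "\<mu> v = l * real (c v)" "0 < c v" using wt c by auto
    then show "0 < c v \<and> weight S v = K * l * real (c v)" by simp
  qed
  moreover have "K * l \<in> \<rat>" using K l by simp
  moreover have "0 < K * l" using K l by simp
  ultimately show "K * l \<in> \<rat> \<and> 0 < K * l \<and> (\<exists>c. (\<forall>v\<in>V. 0 < c v \<and> weight S v = K * l * real (c v)) \<and> Gcd (c ` V) = 1)"
    using c(2) by blast
next
  fix l' assume "l' \<in> \<rat> \<and> 0 < l' \<and> (\<exists>c. (\<forall>v\<in>V. 0 < c v \<and> weight S v = l' * real (c v)) \<and> Gcd (c ` V) = 1)"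
  then obtain c' where l': "l' \<in> \<rat>" "0 < l'" "\<forall>v\<in>V. 0 < c' v \<and> weight S v = l' * real (c' v)" "Gcd (c' ` V) = 1"
    by blast
  have "K * l = l'"
  proof (rule lam_unique[of V _ _ c c'])
    show "\<forall>v\<in>V. K * l * real (c v) = l' * real (c' v)"
    proof
      fix v assume v: "v \<in> V"
      then have "weight S v = K * \<mu> v" "\<mu> v = l * real (c v)" "weight S v = l' * real (c' v)" using wt c l' by auto
      then show "K * l * real (c v) = l' * real (c' v)" by simp
    qed
  qed (use ne K l c l' in simp_all)
  then show "l' = K * l" by simp
qed

lemma Lcm_lemma:
  fixes \<alpha> c :: "'a \<Rightarrow> nat"
  assumes "\<forall>x\<in>V. \<alpha> x * c x = N" "Gcd (c ` V) = 1"
  shows "Lcm (\<alpha> ` V) = N"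
proof (rule dvd_antisym)
  have "\<alpha> x dvd N" if "x \<in> V" for x
  proof -
    have "N = \<alpha> x * c x" using assms(1) that by simp
    then show ?thesis by (rule dvdI)
  qed
  then show "Lcm (\<alpha> ` V) dvd N" by (auto intro!: Lcm_least)
  define L where "L = Lcm (\<alpha> ` V)"
  have "N dvd L * c x" if "x \<in> V" for x
  proof -
    have "\<alpha> x dvd L" unfolding L_def using that by (simp add: dvd_Lcm)
    then have "\<alpha> x * c x dvd L * c x" by simp
    then show ?thesis using assms(1) that by simp
  qed
  then have "N dvd Gcd ((*) L ` (c ` V))" by (auto intro!: Gcd_greatest)
  also have "Gcd ((*) L ` (c ` V)) = L" by (simp add: Gcd_mult assms(2))
  finally show "N dvd Lcm (\<alpha> ` V)" by (simp add: L_def)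
qed




context ipsx begin

lemma vertsV: "verts (convex hull V) = V"
  unfolding verts_def using extreme_point_of_convex_hull_affine_independent[OF indep] by auto

lemma vertsU: "verts (convex hull U) = U"
  unfolding verts_def using extreme_point_of_convex_hull_affine_independent[OF indepU] by auto

definition "K = \<bar>det M\<bar> / \<mu> w"
definition "Ks = \<bar>det Ustar\<bar> / \<mu> w"

lemma weight_by_bij:
  fixes g :: "'n \<Rightarrow> real^'n" and S :: "(real^'n) set"
  assumes "verts S = T" "bij_betw g UNIV (T - {x})"
  shows "weight S x = \<bar>det (\<chi> i. g i)\<bar>"
proof -
  define F where "F = (SOME F. bij_betw F (UNIV::'n set) (verts S - {x}))"
  have "bij_betw g UNIV (verts S - {x})" using assms by simp
  then have "\<exists>F. bij_betw F (UNIV::'n set) (verts S - {x})" by blast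
  from someI_ex[OF this] have "bij_betw F UNIV (verts S - {x})" unfolding F_def .
  then have "\<bar>det (\<chi> i. F i)\<bar> = \<bar>det (\<chi> i. g i)\<bar>" using assms by (intro det_abs_bij) auto
  then show ?thesis unfolding weight_def F_def[symmetric] by simp
qed

lemma weight_V: assumes x: "x \<in> V" shows "weight (convex hull V) x = \<mu> x * K"
proof -
  have h0: "(\<Sum>x\<in>V. \<mu> x *\<^sub>R id x) = 0" using mu0 by simp
  obtain g where g: "bij_betw g UNIV (id ` V - {id x})" "\<bar>det (\<chi> i. g i)\<bar> = \<mu> x / \<mu> w * \<bar>det (\<chi> i. id (f i))\<bar>"
    using weight_gen[OF h0 _ x] by auto
  have "weight (convex hull V) x = \<bar>det (\<chi> i. g i)\<bar>" by (rule weight_by_bij[OF vertsV]) (use g in simp)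
  then show ?thesis using g by (simp add: K_def M_def)
qed

lemma weight_U: assumes x: "x \<in> V" shows "weight (convex hull U) (u x) = \<mu> x * Ks"
proof -
  obtain g where g: "bij_betw g UNIV (u ` V - {u x})" "\<bar>det (\<chi> i. g i)\<bar> = \<mu> x / \<mu> w * \<bar>det (\<chi> i. u (f i))\<bar>"
    using weight_gen[OF u_sum0 u_inj x] by auto
  have "weight (convex hull U) (u x) = \<bar>det (\<chi> i. g i)\<bar>" by (rule weight_by_bij[OF vertsU]) (use g in \<open>simp add: U_def\<close>)
  then show ?thesis using g by (simp add: Ks_def Ustar_def)
qed

lemma wsum_V: "weight_sum (convex hull V) = K"
proof -
  have "weight_sum (convex hull V) = (\<Sum>x\<in>V. \<mu> x * K)" unfolding weight_sum_def vertsV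
    by (rule sum.cong) (auto simp: weight_V)
  then show ?thesis using musum by (simp add: sum_distrib_right[symmetric])
qed

lemma wsum_U: "weight_sum (convex hull U) = Ks"
proof -
  have "weight_sum (convex hull U) = (\<Sum>x\<in>V. weight (convex hull U) (u x))" unfolding weight_sum_def vertsU
    by (rule sum_U)
  also have "\<dots> = (\<Sum>x\<in>V. \<mu> x * Ks)" by (rule sum.cong) (auto simp: weight_U)
  finally show ?thesis using musum by (simp add: sum_distrib_right[symmetric])
qed

lemma Vol_V: "Vol (convex hull V) = K" unfolding Vol_def volV K_def by simp
lemma Vol_U: "Vol (convex hull U) = Ks" unfolding Vol_def volU Ks_def by simp

lemma Kpos: "K > 0" using detM_nz muw by (simp add: K_def)
lemma Kspos: "Ks > 0" using detUstar_nz muw by (simp add: Ks_def)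

lemma KKs: "K * Ks = (\<Prod>x\<in>V. 1 / \<mu> x)"
proof -
  have "K * Ks = \<bar>det M' * det Ustar\<bar> / \<mu> w" using muw by (simp add: K_def Ks_def detM' abs_mult abs_div)
  also have "\<bar>det M' * det Ustar\<bar> = (\<Prod>i\<in>UNIV. 1 / \<mu> (f i))"
    using detMU muf by (simp add: abs_prod less_imp_le)
  finally show ?thesis using prodV[of "\<lambda>x. 1 / \<mu> x"] by simp
qed

lemma u_self: "x \<in> V \<Longrightarrow> u x \<bullet> x = 1 / \<mu> x - 1" using u_pair by (simp add: pr_def)

context
  assumes ratV: "\<forall>v\<in>V. rat_vec v"
begin

lemma det_Rats_rows: "(\<And>i. rat_vec (a i)) \<Longrightarrow> det (\<chi> i. a i) \<in> \<rat>"
  by (rule det_Rats) (simp add: rat_vec_def)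

lemma detM_rat: "det M \<in> \<rat>" unfolding M_def using ratV fV by (intro det_Rats_rows) auto

lemma r_rat: "\<mu> (f j) / \<mu> w \<in> \<rat>"
proof -
  have "(\<chi> i. if i = j then w else f i) = (\<chi> i. if i = j then (\<Sum>k\<in>UNIV. (- (\<mu> (f k) / \<mu> w)) *\<^sub>R f k) else f i)"
    using w_eq by metis
  then have "det (\<chi> i. if i = j then w else f i) = (- (\<mu> (f j) / \<mu> w)) * det M"
    by (simp only: det_row_replace_sum M_def)
  moreover have "det (\<chi> i. if i = j then w else f i) \<in> \<rat>"
    using ratV fV wV by (intro det_Rats_rows) auto
  ultimately have a: "(- (\<mu> (f j) / \<mu> w)) * det M \<in> \<rat>" by simp
  have e: "(- (\<mu> (f j) / \<mu> w)) * det M / det M = - (\<mu> (f j) / \<mu> w)" using detM_nz by simp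
  have "(- (\<mu> (f j) / \<mu> w)) * det M / det M \<in> \<rat>" by (rule Rats_divide[OF a detM_rat])
  then have "- (\<mu> (f j) / \<mu> w) \<in> \<rat>" by (simp only: e)
  then show ?thesis by (metis Rats_minus_iff)
qed

lemma muw_rat: "\<mu> w \<in> \<rat>"
proof -
  have "1 + (\<Sum>k\<in>UNIV. \<mu> (f k) / \<mu> w) = 1 / \<mu> w"
    using muw by (simp add: sum_divide_distrib[symmetric] sum_muf field_simps)
  moreover have "1 + (\<Sum>k\<in>UNIV. \<mu> (f k) / \<mu> w) \<in> \<rat>" using r_rat by (auto intro!: Rats_add Rats_sum)
  ultimately have "1 / \<mu> w \<in> \<rat>" by simp
  then have "1 / (1 / \<mu> w) \<in> \<rat>" by (rule Rats_divide[OF Rats_1])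
  then show ?thesis by simp
qed

lemma mu_rat: assumes x: "x \<in> V" shows "\<mu> x \<in> \<rat>"
proof (cases rule: V_cases[OF x])
  case (2 j)
  have "\<mu> (f j) = (\<mu> (f j) / \<mu> w) * \<mu> w" using muw by simp
  then show ?thesis using 2 r_rat muw_rat by (metis Rats_mult)
qed (use muw_rat in auto)

lemma K_rat: "K \<in> \<rat>" unfolding K_def using detM_rat muw_rat by (auto intro!: Rats_divide Rats_abs_iff[THEN iffD2])

lemma Ks_rat: "Ks \<in> \<rat>"
proof -
  have "Ks = (\<Prod>x\<in>V. 1 / \<mu> x) / K" using KKs Kpos by (simp add: field_simps)
  then show ?thesis using mu_rat K_rat by (auto intro!: Rats_divide Rats_prod)
qed

lemma u_rat: assumes x: "x \<in> V" shows "rat_vec (u x)"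
proof -
  have "M *v u x = (\<chi> i. pr x (f i))" by (simp add: u_def matrix_vector_mul_assoc Minv)
  then have ux: "u x = (\<chi> k. det(\<chi> i j. if j=k then (\<chi> i. pr x (f i))$i else M$i$j) / det M)"
    using cramer[OF detM_nz] by blast
  have "pr x y \<in> \<rat>" for y unfolding pr_def using mu_rat[OF x] by auto
  moreover have "M $ i $ j \<in> \<rat>" for i j using ratV fV by (simp add: M_def rat_vec_def)
  ultimately have dr: "det(\<chi> i j. if j=k then (\<chi> i. pr x (f i))$i else M$i$j) \<in> \<rat>" for k
    by (intro det_Rats) auto
  have "(u x) $ k \<in> \<rat>" for k
  proof -
    have "(u x) $ k = det(\<chi> i j. if j=k then (\<chi> i. pr x (f i))$i else M$i$j) / det M"
      by (subst ux) (simp only: vec_lambda_beta)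
    also have "\<dots> \<in> \<rat>" by (rule Rats_divide[OF dr detM_rat])
    finally show ?thesis .
  qed
  then show ?thesis unfolding rat_vec_def by blast
qed

end

end




theorem proposition2p10:
  fixes S :: "(real^'n) set"
  assumes "IP_simplex S"
  defines "g \<equiv> real (gorenstein S)" and "d \<equiv> CARD('n)"
  shows "\<exists>\<alpha>s :: nat multiset.
     ufp S = image_mset real \<alpha>s \<and>
     ufp (dual S) = ufp S \<and>
     Vol S * Vol (dual S) = real (prod_mset \<alpha>s) / g ^ (d + 1) \<and>
     lam (dual S) * Vol S = real (prod_mset \<alpha>s) / (g ^ d * real (Lcm (set_mset \<alpha>s))) \<and>
     lam S * Vol (dual S) = real (prod_mset \<alpha>s) / (g ^ d * real (Lcm (set_mset \<alpha>s))) \<and>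
     lam S * lam (dual S) = real (prod_mset \<alpha>s) / (g ^ (d - 1) * real (Lcm (set_mset \<alpha>s)) ^ 2)"
proof -
  obtain V where V: "finite V" "card V = CARD('n) + 1" "\<not> affine_dependent V"
      "S = convex hull V" "\<forall>v\<in>V. rat_vec v" "0 \<in> interior S"
    using assms(1) unfolding IP_simplex_def by blast
  have "\<not> card V \<le> DIM(real^'n)" using V(2) by simp
  then obtain \<mu> where mu: "\<forall>x\<in>V. 0 < \<mu> x" "sum \<mu> V = 1" "(\<Sum>x\<in>V. \<mu> x *\<^sub>R x) = 0"
    using V(6) unfolding V(4) interior_convex_hull_explicit_minimal[OF V(3)] by auto
  have "V \<noteq> {}" using V(2) by auto
  then obtain w where wV: "w \<in> V" by blast
  have "card (V - {w}) = card (UNIV :: 'n set)" using V(1,2) wV by simp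
  then have "\<exists>h. bij_betw h (UNIV::'n set) (V - {w})"
    by (intro finite_same_card_bij) (use V(1) in auto)
  then obtain f where f: "bij_betw f (UNIV :: 'n set) (V - {w})" by blast
  interpret I: ipsx V w f \<mu>
    by unfold_locales (use V mu wV f in auto)
  note ratV = V(5)
  define D where "D = dual S"
  have SD: "D = convex hull I.U" unfolding D_def V(4) by (rule I.dualV)
  have DD: "dual D = S" unfolding SD V(4) by (rule I.dualU)
  have vS: "verts S = V" unfolding V(4) by (rule I.vertsV)
  have vD: "verts D = I.U" unfolding SD by (rule I.vertsU)
  have ratU: "\<forall>v\<in>I.U. rat_vec v" using I.u_rat[OF ratV] by (auto simp: I.U_def)
  have gS: "gQ S \<ge> 1 \<and> (\<forall>v\<in>V. int_vec (real (gQ S) *\<^sub>R v))"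
    using gQ_props[of S] vS V(1) ratV by simp
  have gD: "gQ D \<ge> 1 \<and> (\<forall>v\<in>I.U. int_vec (real (gQ D) *\<^sub>R v))"
    using gQ_props[of D] vD I.finU ratU by simp
  have gdef: "g = real (gQ S) * real (gQ D)" unfolding g_def gorenstein_def D_def by simp
  have gD_eq: "real (gorenstein D) = g" unfolding gorenstein_def DD gdef by simp
  have gpos: "g \<ge> 1" using gS gD unfolding gdef by (metis mult_le_mono of_nat_1 of_nat_le_iff of_nat_mult mult_1)
  have aint: "g / \<mu> x \<in> \<int>" if x: "x \<in> V" for x
  proof -
    have ux: "I.u x \<in> I.U" using x by (simp add: I.U_def)
    have "(real (gQ S) *\<^sub>R x) \<bullet> (real (gQ D) *\<^sub>R I.u x) \<in> \<int>"
      by (rule int_vec_inner) (use gS gD x ux in auto)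
    then have "g * (I.u x \<bullet> x) \<in> \<int>" unfolding gdef by (simp add: inner_commute mult_ac)
    then have "g * (I.u x \<bullet> x) + g \<in> \<int>" using gpos
      by (metis Ints_add Ints_of_nat g_def)
    moreover have "g * (I.u x \<bullet> x) + g = g / \<mu> x" using I.u_self[OF x]
      by (simp add: right_diff_distrib)
    ultimately show ?thesis by simp
  qed
  define \<alpha> where "\<alpha> x = nat \<lfloor>g / \<mu> x\<rfloor>" for x
  have ra: "real (\<alpha> x) = g / \<mu> x" if x: "x \<in> V" for x
  proof -
    have "g / \<mu> x \<ge> 0" using gpos I.mupos[OF x] by simp
    then show ?thesis using aint[OF x] unfolding \<alpha>_def by (metis Ints_cases floor_of_int of_int_of_nat_eq nat_0_le of_int_0_le_iff)
  qed
  define \<alpha>s where "\<alpha>s = image_mset \<alpha> (mset_set V)"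
  obtain l c where lc: "l \<in> \<rat>" "l > 0" "\<forall>x\<in>V. c x > (0::nat) \<and> \<mu> x = l * real (c x)" "Gcd (c ` V) = 1"
    using lam_exists[of V \<mu>] V(1) \<open>V \<noteq> {}\<close> I.mu_rat[OF ratV] I.mupos by blast
  obtain x0 where x0: "x0 \<in> V" using wV by blast
  define N where "N = \<alpha> x0 * c x0"
  have aN: "real (\<alpha> x) * real (c x) = g / l" if x: "x \<in> V" for x
    using ra[OF x] lc(3) x I.mupos[OF x] lc(2) by (simp add: field_simps)
  have Nr: "real N = g / l" unfolding N_def using aN[OF x0] by simp
  have aN': "\<alpha> x * c x = N" if "x \<in> V" for x using aN[OF that] Nr by (metis of_nat_eq_iff of_nat_mult)
  have setA: "set_mset \<alpha>s = \<alpha> ` V" unfolding \<alpha>s_def using V(1) by simp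
  have Lcm: "Lcm (set_mset \<alpha>s) = N" unfolding setA by (rule Lcm_lemma) (use aN' lc(4) in auto)
  define P where "P = (\<Prod>x\<in>V. 1 / \<mu> x)"
  have prod: "real (prod_mset \<alpha>s) = g ^ (d + 1) * P"
  proof -
    have "real (prod_mset \<alpha>s) = (\<Prod>x\<in>V. real (\<alpha> x))" unfolding \<alpha>s_def
      by (simp add: prod_unfold_prod_mset[symmetric])
    also have "\<dots> = (\<Prod>x\<in>V. g * (1 / \<mu> x))" by (rule prod.cong) (auto simp: ra)
    also have "\<dots> = g ^ card V * P" by (simp only: prod.distrib prod_constant P_def)
    finally show ?thesis using V(2) by (simp add: d_def)
  qed
  have VolS: "Vol S = I.K" unfolding V(4) by (rule I.Vol_V)
  have VolD: "Vol D = I.Ks" unfolding SD by (rule I.Vol_U)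
  have KKs: "I.K * I.Ks = P" unfolding P_def by (rule I.KKs)
  have lamS: "lam S = I.K * l"
    by (rule lam_eval[OF vS \<open>V \<noteq> {}\<close> I.K_rat[OF ratV] I.Kpos _ lc(1,2) lc(3,4)])
       (use I.weight_V V(4) in \<open>simp add: mult.commute\<close>)
  have lamD: "lam D = I.Ks * l"
  proof -
    define iu where "iu = inv_into V I.u"
    have iu: "iu (I.u x) = x" if "x \<in> V" for x unfolding iu_def using I.u_inj that by simp
    have "I.U \<noteq> {}" using \<open>V \<noteq> {}\<close> by (simp add: I.U_def)
    moreover have "\<forall>y\<in>I.U. weight D y = I.Ks * \<mu> (iu y)"
      using I.weight_U iu unfolding SD by (auto simp: I.U_def mult.commute)
    moreover have "\<forall>y\<in>I.U. (c \<circ> iu) y > (0::nat) \<and> \<mu> (iu y) = l * real ((c \<circ> iu) y)"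
      using lc(3) iu by (auto simp: I.U_def)
    moreover have "Gcd ((c \<circ> iu) ` I.U) = 1"
    proof -
      have "(c \<circ> iu) ` I.U = c ` V" using iu by (force simp: I.U_def image_iff)
      then show ?thesis using lc(4) by simp
    qed
    ultimately show ?thesis
      using lam_eval[OF vD _ I.Ks_rat[OF ratV] I.Kspos _ lc(1,2), of "\<mu> \<circ> iu" "c \<circ> iu"] by simp
  qed
  have ufpS: "ufp S = image_mset real \<alpha>s"
  proof -
    have "ufp S = image_mset (\<lambda>v. g * weight_sum S / weight S v) (mset_set V)"
      unfolding ufp_def vS g_def by simp
    also have "\<dots> = image_mset (\<lambda>v. real (\<alpha> v)) (mset_set V)"
    proof (rule image_mset_cong)
      fix v assume "v \<in># mset_set V"
      then have v: "v \<in> V" using V(1) by simp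
      have "weight_sum S = I.K" unfolding V(4) by (rule I.wsum_V)
      moreover have "weight S v = \<mu> v * I.K" unfolding V(4) by (rule I.weight_V[OF v])
      ultimately show "g * weight_sum S / weight S v = real (\<alpha> v)" using ra[OF v] I.Kpos by simp
    qed
    finally show ?thesis unfolding \<alpha>s_def by (simp add: multiset.map_comp o_def)
  qed
  have ufpD: "ufp D = image_mset real \<alpha>s"
  proof -
    have mU: "mset_set I.U = image_mset I.u (mset_set V)"
      unfolding I.U_def by (rule image_mset_mset_set[OF I.u_inj, symmetric])
    have "ufp D = image_mset (\<lambda>y. g * weight_sum D / weight D y) (image_mset I.u (mset_set V))"
      unfolding ufp_def vD gD_eq mU by simp
    also have "\<dots> = image_mset (\<lambda>v. real (\<alpha> v)) (mset_set V)"
      unfolding multiset.map_comp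
    proof (rule image_mset_cong)
      fix v assume "v \<in># mset_set V"
      then have v: "v \<in> V" using V(1) by simp
      have "weight_sum D = I.Ks" unfolding SD by (rule I.wsum_U)
      moreover have "weight D (I.u v) = \<mu> v * I.Ks" unfolding SD by (rule I.weight_U[OF v])
      ultimately show "((\<lambda>y. g * weight_sum D / weight D y) \<circ> I.u) v = real (\<alpha> v)" using ra[OF v] I.Kspos by simp
    qed
    finally show ?thesis unfolding \<alpha>s_def by (simp add: multiset.map_comp o_def)
  qed
  have d1: "d \<ge> 1" unfolding d_def by (simp add: Suc_le_eq)
  have gp: "g > 0" using gpos by simp
  have e1: "Vol S * Vol (dual S) = real (prod_mset \<alpha>s) / g ^ (d + 1)"
    using VolS VolD KKs prod gp unfolding D_def by simp
  have e2: "lam (dual S) * Vol S = real (prod_mset \<alpha>s) / (g ^ d * real (Lcm (set_mset \<alpha>s)))"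
  proof -
    have "lam (dual S) * Vol S = l * P" using lamD VolS KKs unfolding D_def by (simp add: mult_ac)
    also have "\<dots> = g ^ (d + 1) * P / (g ^ d * (g / l))" using gp lc(2) by (simp add: field_simps)
    finally show ?thesis using prod Lcm Nr by simp
  qed
  have e3: "lam S * Vol (dual S) = real (prod_mset \<alpha>s) / (g ^ d * real (Lcm (set_mset \<alpha>s)))"
  proof -
    have "lam S * Vol (dual S) = l * P" using lamS VolD KKs unfolding D_def by (simp add: mult_ac)
    also have "\<dots> = g ^ (d + 1) * P / (g ^ d * (g / l))" using gp lc(2) by (simp add: field_simps)
    finally show ?thesis using prod Lcm Nr by simp
  qed
  have e4: "lam S * lam (dual S) = real (prod_mset \<alpha>s) / (g ^ (d - 1) * real (Lcm (set_mset \<alpha>s)) ^ 2)"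
  proof -
    have "lam S * lam (dual S) = l * l * P" using lamS lamD KKs unfolding D_def by (simp add: mult_ac)
    also have "\<dots> = g ^ (d + 1) * P / (g ^ (d - 1) * (g / l) ^ 2)"
    proof -
      have "g ^ (d + 1) = g ^ (d - 1) * g ^ 2" using d1 by (simp add: power_add[symmetric])
      then show ?thesis using gp lc(2) by (simp add: field_simps power2_eq_square)
    qed
    finally show ?thesis using prod Lcm Nr by simp
  qed
  show ?thesis
    using ufpS ufpD e1 e2 e3 e4 unfolding D_def by (intro exI[of _ \<alpha>s]) simp
qed


end
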